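(* Let $n\ge 2$ and fix positive integers $d_1,\dots,d_n$. Consider minimizing $(f_n-f_1)^2$ over real vectors $(f_1,\dots,f_n)$ subject to \[ \sum_{i=1}^n f_i d_i=0,\qquad \sum_{i=1}^n f_i^2 d_i=1, \] and $f_1\le f_k\le f_n$ for all $k$. If $(f_1,\dots,f_n)$ is a minimizer, then for every $k$ one has $f_k=f_1$ or $f_k=f_n$. *)

theory Defs
  imports Complex_Main
begin

text \<open>Vectors (f_1,...,f_n) are represented as functions nat => real, only the
values on {1..n} matter. Weights d_1..d_n are positive integers.\<close>

definition feasible :: "nat \<Rightarrow> (nat \<Rightarrow> nat) \<Rightarrow> (nat \<Rightarrow> real) \<Rightarrow> bool" where
  "feasible n d f \<longleftrightarrow>
     (\<Sum>i=1..n. f i * real (d i)) = 0 \<and>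
     (\<Sum>i=1..n. (f i)^2 * real (d i)) = 1 \<and>
     (\<forall>k\<in>{1..n}. f 1 \<le> f k \<and> f k \<le> f n)"

definition is_minimizer :: "nat \<Rightarrow> (nat \<Rightarrow> nat) \<Rightarrow> (nat \<Rightarrow> real) \<Rightarrow> bool" where
  "is_minimizer n d f \<longleftrightarrow>
     feasible n d f \<and>
     (\<forall>g. feasible n d g \<longrightarrow> (f n - f 1)^2 \<le> (g n - g 1)^2)"

end

theory Submission
  imports Defs
begin

lemma sum_upd:
  fixes F :: "real \<Rightarrow> nat \<Rightarrow> real"
  assumes "finite A" "k \<in> A"
  shows "(\<Sum>i\<in>A. F ((f(k:=t)) i) i) = (\<Sum>i\<in>A. F (f i) i) - F (f k) k + F t k"
proof -
  have "(\<Sum>i\<in>A. F ((f(k:=t)) i) i) = F ((f(k:=t)) k) k + (\<Sum>i\<in>A-{k}. F ((f(k:=t)) i) i)"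
    by (rule sum.remove[OF assms])
  also have "F ((f(k:=t)) k) k = F t k" by simp
  also have "(\<Sum>i\<in>A-{k}. F ((f(k:=t)) i) i) = (\<Sum>i\<in>A-{k}. F (f i) i)"
    by (rule sum.cong) auto
  also have "\<dots> = (\<Sum>i\<in>A. F (f i) i) - F (f k) k"
    using sum.remove[OF assms, of "\<lambda>i. F (f i) i"] by simp
  finally show ?thesis by simp
qed

lemma normalize:
  fixes A :: "nat set" and w :: "nat \<Rightarrow> real" and h :: "nat \<Rightarrow> real"
  assumes "finite A" "W = sum w A" "W > 0"
    "S = (\<Sum>i\<in>A. h i^2 * w i) - (\<Sum>i\<in>A. h i * w i)^2 / W" "S > 0"
    "m = (\<Sum>i\<in>A. h i * w i)/W"
  shows "(\<Sum>i\<in>A. ((h i - m)/sqrt S) * w i) = 0"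
    and "(\<Sum>i\<in>A. ((h i - m)/sqrt S)^2 * w i) = 1"
proof -
  define L where "L = (\<Sum>i\<in>A. h i * w i)"
  define Q where "Q = (\<Sum>i\<in>A. h i^2 * w i)"
  have "(\<Sum>i\<in>A. ((h i - m)/sqrt S) * w i) = (\<Sum>i\<in>A. h i * w i - m * w i) / sqrt S"
    by (simp add: sum_divide_distrib algebra_simps)
  also have "\<dots> = (L - m * W) / sqrt S"
    by (simp add: sum_subtractf sum_distrib_left L_def assms(2))
  also have "L - m * W = 0" using assms(3) by (simp add: assms(6) L_def)
  finally show "(\<Sum>i\<in>A. ((h i - m)/sqrt S) * w i) = 0" by simp
  have "(\<Sum>i\<in>A. ((h i - m)/sqrt S)^2 * w i) = (\<Sum>i\<in>A. h i^2 * w i - 2 * m * (h i * w i) + m^2 * w i) / S"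
    using assms(5) by (simp add: sum_divide_distrib power_divide power2_diff algebra_simps)
  also have "\<dots> = (Q - 2 * m * L + m^2 * W) / S"
    by (simp add: sum_subtractf sum.distrib sum_distrib_left L_def Q_def assms(2))
  also have "Q - 2 * m * L + m^2 * W = S"
    using assms(3) by (simp add: assms(4,6) L_def Q_def field_simps power2_eq_square)
  finally show "(\<Sum>i\<in>A. ((h i - m)/sqrt S)^2 * w i) = 1" using assms(5) by simp
qed

theorem proposition2p1:
  fixes n :: nat and d :: "nat \<Rightarrow> nat" and f :: "nat \<Rightarrow> real"
  assumes "n \<ge> 2"
    and "\<And>i. i \<in> {1..n} \<Longrightarrow> d i > 0"
    and "is_minimizer n d f"
  shows "\<forall>k\<in>{1..n}. f k = f 1 \<or> f k = f n"
proof (rule ccontr)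
  assume "\<not> ?thesis"
  then obtain k where k: "k \<in> {1..n}" "f k \<noteq> f 1" "f k \<noteq> f n" by blast
  have feas: "feasible n d f" and minf: "\<And>g. feasible n d g \<Longrightarrow> (f n - f 1)^2 \<le> (g n - g 1)^2"
    using assms(3) unfolding is_minimizer_def by auto
  have s0: "(\<Sum>i=1..n. f i * real (d i)) = 0" and s1: "(\<Sum>i=1..n. (f i)^2 * real (d i)) = 1"
    and rng: "\<forall>j\<in>{1..n}. f 1 \<le> f j \<and> f j \<le> f n"
    using feas unfolding feasible_def by auto
  define a where "a = f 1"
  define b where "b = f n"
  have ak: "a < f k" and kb: "f k < b" using rng k unfolding a_def b_def by force+
  have k1: "k \<noteq> 1" and kn: "k \<noteq> n" using k by auto
  have n1: "1 \<noteq> n" using assms(1) by auto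
  define D where "D = (\<Sum>i=1..n. real (d i))"
  have "D = real (d k) + (\<Sum>i\<in>{1..n}-{k}. real (d i))"
    unfolding D_def using sum.remove[of "{1..n}" k] k by simp
  moreover have "(\<Sum>i\<in>{1..n}-{k}. real (d i)) \<ge> real (d 1)"
    using member_le_sum[of 1 "{1..n}-{k}" "\<lambda>i. real (d i)"] k1 assms(1) by auto
  moreover have "d 1 > 0" "d k > 0" using assms(2) k assms(1) by auto
  ultimately have Dk: "D > real (d k)" and Dpos: "D > 0" by auto
  define H where "H t = f(k:=t)" for t
  define Sf where "Sf t = (\<Sum>i=1..n. (H t i)^2 * real (d i)) - (\<Sum>i=1..n. H t i * real (d i))^2 / D" for t
  have Sfe: "Sf t = 1 + (t^2 - f k^2) * d k - ((t - f k) * d k)^2 / D" for t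
  proof -
    have A: "(\<Sum>i=1..n. (H t i)^2 * real (d i)) = 1 - f k ^2 * d k + t^2 * d k"
      unfolding H_def using sum_upd[of "{1..n}" k "\<lambda>x i. x^2 * real (d i)" f t] k s1 by simp
    have B: "(\<Sum>i=1..n. H t i * real (d i)) = 0 - f k * d k + t * d k"
      unfolding H_def using sum_upd[of "{1..n}" k "\<lambda>x i. x * real (d i)" f t] k s0 by simp
    show ?thesis unfolding Sf_def A B by (simp add: algebra_simps)
  qed
  define e where "e = min (f k - a) (b - f k)"
  have epos: "e > 0" using ak kb by (simp add: e_def)
  have "Sf (f k + e) + Sf (f k - e) = 2 + 2 * e^2 * d k * (1 - d k / D)"
    unfolding Sfe using Dpos by (simp add: field_simps power2_eq_square)
  moreover have "2 * e^2 * d k * (1 - d k / D) > 0"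
    using epos Dk Dpos \<open>d k > 0\<close> by (simp add: field_simps)
  ultimately have "Sf (f k + e) > 1 \<or> Sf (f k - e) > 1" by linarith
  then obtain t where t: "Sf t > 1" "a \<le> t" "t \<le> b"
    using epos unfolding e_def by (auto simp: min_def split: if_splits)
  define h where "h = H t"
  define m where "m = (\<Sum>i=1..n. h i * real (d i)) / D"
  define S where "S = Sf t"
  define g where "g i = (h i - m) / sqrt S" for i
  have Spos: "S > 0" using t S_def by simp
  have g0: "(\<Sum>i=1..n. g i * real (d i)) = 0"
    using normalize(1)[of "{1..n}" D "\<lambda>i. real (d i)" S h m] Dpos Spos
    unfolding g_def S_def Sf_def h_def m_def D_def by simp
  have g1: "(\<Sum>i=1..n. (g i)^2 * real (d i)) = 1"
    using normalize(2)[of "{1..n}" D "\<lambda>i. real (d i)" S h m] Dpos Spos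
    unfolding g_def S_def Sf_def h_def m_def D_def by simp
  have h1: "h 1 = a" and hn: "h n = b" using k1 kn unfolding h_def H_def a_def b_def by auto
  have hr: "a \<le> h j \<and> h j \<le> b" if "j \<in> {1..n}" for j
    using rng that t unfolding h_def H_def a_def b_def by auto
  have mono: "g x \<le> g y" if "h x \<le> h y" for x y
    unfolding g_def using Spos that by (simp add: divide_right_mono)
  have "feasible n d g" unfolding feasible_def using g0 g1 hr h1 hn mono by auto
  hence "(b - a)^2 \<le> (g n - g 1)^2" using minf unfolding a_def b_def by simp
  also have "g n - g 1 = (b - a) / sqrt S" unfolding g_def using h1 hn by (simp add: diff_divide_distrib)
  also have "((b - a) / sqrt S)^2 = (b - a)^2 / S" using Spos by (simp add: power_divide)
  finally have "(b - a)^2 \<le> (b - a)^2 / S" .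
  moreover have "(b - a)^2 > 0" using ak kb by simp
  ultimately show False using t S_def by (simp add: field_simps)
qed

end
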